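(* Let $m \geq 4$ and let $\Delta_m$ be the two-edge-coloured graph defined in the context. Then: (1) There exists a transversal graph $T$ of $\Delta_m$ such that no transversal graph of $\Delta_m$ is isomorphic, as an edge-coloured graph, to the edge-colour complement of $T$. (2) There is no permutation $\pi$ of the set of $4^m$ positive signed basis matrices that sends every amicable pair of basis matrices with disjoint support to an anti-amicable pair with disjoint support and every anti-amicable pair with disjoint support to an amicable pair with disjoint support; and the set of transversal graphs of $\Delta_m$ that are not isomorphic (as edge-coloured graphs) to their own edge-colour complement cannot be partitioned into pairs in which each member is isomorphic to the edge-colour complement of the other. (3) Among all $m' \geq 1$, the values for which there exists an automorphism of $\Delta_{m'}$ that swaps the red subgraph $\Delta_{m'}[-1]$ and the blue subgraph $\Delta_{m'}[1]$ are exactly $m' = 1, 2, 3$.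
   Context: Let $E_1 = \begin{pmatrix} 0 & -1 \\ 1 & 0\end{pmatrix}$ and $E_2 = \begin{pmatrix} 0 & 1 \\ 1 & 0 \end{pmatrix}$. The positive signed basis of the real monomial representation of the Clifford algebra $\mathbb{R}_{m,m}$ is the set of $4^m$ real monomial $2^m\times 2^m$ matrices $M_1\otimes M_2\otimes\cdots\otimes M_m$ with each $M_t \in \{I_2, E_1, E_2, E_1E_2\}$ (one fixed sign per such product). Two matrices have disjoint support if there is no position where both have a nonzero entry. Two orthogonal matrices $A,B$ are amicable if $AB^{-1}$ is symmetric and anti-amicable if $AB^{-1}$ is skew-symmetric. $\Delta_m$ is the graph whose vertices are the $4^m$ positive signed basis matrices, in which distinct $A,B$ are joined by a red edge (label $-1$) if they have disjoint support and are anti-amicable, by a blue edge (label $1$) if they have disjoint support and are amicable, and are not adjacent otherwise. $\Delta_m[-1]$ (resp. $\Delta_m[1]$) is the graph on the same vertex set with only the red (resp. blue) edges. A transversal graph of $\Delta_m$ is an induced subgraph of $\Delta_m$ that is a complete graph on $2^m$ vertices (with its edge colours). The edge-colour complement of an edge-coloured complete graph is obtained by swapping the colours red and blue on every edge. An automorphism of $\Delta_m$ swapping $\Delta_m[-1]$ and $\Delta_m[1]$ is a permutation of the vertices mapping red edges exactly onto blue edges and blue edges exactly onto red edges. *)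

theory Defs
  imports Main
begin

text \<open>Matrices are represented as functions nat => nat => int; an n x n matrix is
  zero outside the index range {0..<n} x {0..<n}.  All matrices occurring here
  have entries in {-1,0,1} (real monomial matrices with integer entries).\<close>

type_synonym mat = "nat \<Rightarrow> nat \<Rightarrow> int"

definition I2 :: mat where
  "I2 i j = (if i < 2 \<and> j < 2 \<and> i = j then 1 else 0)"

definition E1 :: mat where
  "E1 i j = (if i = 0 \<and> j = 1 then -1 else if i = 1 \<and> j = 0 then 1 else 0)"

definition E2 :: mat where
  "E2 i j = (if (i = 0 \<and> j = 1) \<or> (i = 1 \<and> j = 0) then 1 else 0)"

definition mmul :: "nat \<Rightarrow> mat \<Rightarrow> mat \<Rightarrow> mat" where
  "mmul n A B i j = (if i < n \<and> j < n then (\<Sum>k<n. A i k * B k j) else 0)"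

definition mtrans :: "mat \<Rightarrow> mat" where
  "mtrans A i j = A j i"

definition factor :: "nat \<Rightarrow> mat" where
  "factor t = (if t = 0 then I2 else if t = 1 then E1 else if t = 2 then E2
               else mmul 2 E1 E2)"

definition kron :: "nat \<Rightarrow> mat \<Rightarrow> mat \<Rightarrow> mat" where
  "kron q A B i j = A (i div q) (j div q) * B (i mod q) (j mod q)"

fun kron_list :: "mat list \<Rightarrow> mat" where
  "kron_list [] = (\<lambda>i j. if i = 0 \<and> j = 0 then 1 else 0)"
| "kron_list (M # Ms) = kron (2 ^ length Ms) M (kron_list Ms)"

definition basis :: "nat \<Rightarrow> mat set" where
  "basis m = {kron_list (map factor ts) | ts. length ts = m \<and> set ts \<subseteq> {0..<4}}"

definition disjoint_support :: "nat \<Rightarrow> mat \<Rightarrow> mat \<Rightarrow> bool" where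
  "disjoint_support n A B \<longleftrightarrow> (\<forall>i<n. \<forall>j<n. A i j = 0 \<or> B i j = 0)"

definition symmetric_mat :: "nat \<Rightarrow> mat \<Rightarrow> bool" where
  "symmetric_mat n C \<longleftrightarrow> (\<forall>i<n. \<forall>j<n. C j i = C i j)"

definition skew_mat :: "nat \<Rightarrow> mat \<Rightarrow> bool" where
  "skew_mat n C \<longleftrightarrow> (\<forall>i<n. \<forall>j<n. C j i = - C i j)"

text \<open>For orthogonal B (all basis matrices are orthogonal), B^{-1} = B^T.\<close>
definition amicable :: "nat \<Rightarrow> mat \<Rightarrow> mat \<Rightarrow> bool" where
  "amicable n A B \<longleftrightarrow> symmetric_mat n (mmul n A (mtrans B))"

definition anti_amicable :: "nat \<Rightarrow> mat \<Rightarrow> mat \<Rightarrow> bool" where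
  "anti_amicable n A B \<longleftrightarrow> skew_mat n (mmul n A (mtrans B))"

definition red :: "nat \<Rightarrow> mat \<Rightarrow> mat \<Rightarrow> bool" where
  "red m A B \<longleftrightarrow> A \<in> basis m \<and> B \<in> basis m \<and> A \<noteq> B \<and>
     disjoint_support (2^m) A B \<and> anti_amicable (2^m) A B"

definition blue :: "nat \<Rightarrow> mat \<Rightarrow> mat \<Rightarrow> bool" where
  "blue m A B \<longleftrightarrow> A \<in> basis m \<and> B \<in> basis m \<and> A \<noteq> B \<and>
     disjoint_support (2^m) A B \<and> amicable (2^m) A B"

text \<open>Edge-coloured graphs: (vertex set, red relation, blue relation).\<close>
type_synonym 'a ecgraph = "'a set \<times> ('a \<Rightarrow> 'a \<Rightarrow> bool) \<times> ('a \<Rightarrow> 'a \<Rightarrow> bool)"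

definition ec_iso :: "'a ecgraph \<Rightarrow> 'b ecgraph \<Rightarrow> ('a \<Rightarrow> 'b) \<Rightarrow> bool" where
  "ec_iso G H f \<longleftrightarrow> (case G of (V, R, B) \<Rightarrow> case H of (V', R', B') \<Rightarrow>
      bij_betw f V V' \<and>
      (\<forall>x\<in>V. \<forall>y\<in>V. (R x y \<longleftrightarrow> R' (f x) (f y)) \<and> (B x y \<longleftrightarrow> B' (f x) (f y))))"

definition ec_isomorphic :: "'a ecgraph \<Rightarrow> 'b ecgraph \<Rightarrow> bool" where
  "ec_isomorphic G H \<longleftrightarrow> (\<exists>f. ec_iso G H f)"

definition colour_complement :: "'a ecgraph \<Rightarrow> 'a ecgraph" where
  "colour_complement G = (case G of (V, R, B) \<Rightarrow> (V, B, R))"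

definition Delta :: "nat \<Rightarrow> mat ecgraph" where
  "Delta m = (basis m, red m, blue m)"

definition induced :: "nat \<Rightarrow> mat set \<Rightarrow> mat ecgraph" where
  "induced m S = (S, \<lambda>x y. x \<in> S \<and> y \<in> S \<and> red m x y, \<lambda>x y. x \<in> S \<and> y \<in> S \<and> blue m x y)"

definition transversal :: "nat \<Rightarrow> mat set \<Rightarrow> bool" where
  "transversal m S \<longleftrightarrow> S \<subseteq> basis m \<and> card S = 2^m \<and>
     (\<forall>x\<in>S. \<forall>y\<in>S. x \<noteq> y \<longrightarrow> red m x y \<or> blue m x y)"

definition swapping_automorphism :: "nat \<Rightarrow> (mat \<Rightarrow> mat) \<Rightarrow> bool" where
  "swapping_automorphism m \<pi> \<longleftrightarrow> bij_betw \<pi> (basis m) (basis m) \<and>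
     (\<forall>A\<in>basis m. \<forall>B\<in>basis m.
        (red m A B \<longleftrightarrow> blue m (\<pi> A) (\<pi> B)) \<and> (blue m A B \<longleftrightarrow> red m (\<pi> A) (\<pi> B)))"

end

theory Submission
  imports Defs
begin


lemma sum_split2: "(\<Sum>k<2*(q::nat). f k) = (\<Sum>k<q. f k) + (\<Sum>k<q. f (q+k)::int)"
proof -
  have "(\<Sum>k<2*q. f k) = sum f {0..<q} + sum f {q..<q+q}"
    by (simp add: mult_2 atLeast0LessThan[symmetric] sum.atLeastLessThan_concat)
  also have "sum f {q..<q+q} = (\<Sum>k<q. f (q+k))"
    using sum.shift_bounds_nat_ivl[of f 0 q q] by (simp add: atLeast0LessThan add.commute)
  finally show ?thesis by (simp add: atLeast0LessThan)
qed

definition hp :: "mat \<Rightarrow> mat \<Rightarrow> mat" where "hp A B i j = A i j * B i j"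
definition nz :: "nat \<Rightarrow> mat \<Rightarrow> bool" where "nz n A \<longleftrightarrow> (\<exists>i<n. \<exists>j<n. A i j \<noteq> 0)"
definition tr :: "nat \<Rightarrow> mat \<Rightarrow> int" where "tr n A = (\<Sum>i<n. A i i)"
definition smul :: "int \<Rightarrow> mat \<Rightarrow> mat" where "smul c A i j = c * A i j"
definition pm :: "nat \<Rightarrow> nat \<Rightarrow> mat" where "pm s t = mmul 2 (factor s) (mtrans (factor t))"
definition M :: "nat list \<Rightarrow> mat" where "M ts = kron_list (map factor ts)"

lemma hp_kron: "hp (kron q A B) (kron q C D) = kron q (hp A C) (hp B D)"
  by (auto simp: hp_def kron_def fun_eq_iff)

lemma trans_kron: "mtrans (kron q A B) = kron q (mtrans A) (mtrans B)"
  by (auto simp: mtrans_def kron_def fun_eq_iff)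

lemma smul_kron: "kron q (smul c A) (smul d B) = smul (c*d) (kron q A B)"
  by (auto simp: smul_def kron_def fun_eq_iff)

lemma nz_kron: assumes "q > 0" shows "nz (2*q) (kron q A B) \<longleftrightarrow> nz 2 A \<and> nz q B"
proof
  assume "nz (2*q) (kron q A B)"
  then obtain i j where "i < 2*q" "j<2*q" "A (i div q) (j div q) * B (i mod q) (j mod q) \<noteq> 0"
    by (auto simp: nz_def kron_def)
  moreover have "i div q < 2" "j div q < 2" using \<open>i<2*q\<close> \<open>j<2*q\<close>
    by (simp_all add: less_mult_imp_div_less mult.commute)
  ultimately show "nz 2 A \<and> nz q B" unfolding nz_def using assms
    by (metis mult_eq_0_iff mod_less_divisor)
next
  assume "nz 2 A \<and> nz q B"
  then obtain a b i j where ab: "a<2" "b<2" "A a b \<noteq> 0" "i<q" "j<q" "B i j \<noteq> 0"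
    by (auto simp: nz_def)
  have "a*q+i < 2*q" "b*q+j<2*q" using ab
  proof -
    have "a*q+i < a*q+q" "b*q+j<b*q+q" using ab by simp_all
    moreover have "a*q+q \<le> 2*q" "b*q+q \<le> 2*q" using ab
      by (simp_all add: Suc_leI add_mult_distrib[symmetric] mult_le_mono1 del: add_mult_distrib)
    ultimately show "a*q+i < 2*q" "b*q+j<2*q" by linarith+
  qed
  moreover have "kron q A B (a*q+i) (b*q+j) \<noteq> 0" using ab
    by (simp add: kron_def)
  ultimately show "nz (2*q) (kron q A B)" unfolding nz_def by blast
qed

lemma divq: "k < (q::nat) \<Longrightarrow> (q+k) div q = 1" "k < q \<Longrightarrow> (k+q) div q = 1"
  "k < q \<Longrightarrow> (q+k) mod q = k" "k < q \<Longrightarrow> (k+q) mod q = k"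
  by (simp_all add: div_add_self1 div_add_self2)

lemma tr_kron: assumes "q > 0" shows "tr (2*q) (kron q A B) = tr 2 A * tr q B"
proof -
  have a: "(\<Sum>i<q. kron q A B i i) = (\<Sum>k<q. A 0 0 * B k k)"
    by (rule sum.cong) (auto simp: kron_def)
  have b: "(\<Sum>i<q. kron q A B (q+i) (q+i)) = (\<Sum>k<q. A 1 1 * B k k)"
    by (rule sum.cong) (auto simp: kron_def divq)
  have "tr (2*q) (kron q A B) = (\<Sum>k<q. A 0 0 * B k k) + (\<Sum>k<q. A 1 1 * B k k)"
    unfolding tr_def sum_split2 a b ..
  also have "\<dots> = (A 0 0 + A 1 1) * tr q B"
    by (simp add: tr_def sum_distrib_left[symmetric] distrib_right)
  finally show ?thesis by (simp add: tr_def eval_nat_numeral)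
qed

lemma mmul_kron: assumes "q > 0"
  shows "mmul (2*q) (kron q A B) (mtrans (kron q C D)) = kron q (mmul 2 A (mtrans C)) (mmul q B (mtrans D))"
proof (rule ext, rule ext)
  fix i j
  show "mmul (2*q) (kron q A B) (mtrans (kron q C D)) i j = kron q (mmul 2 A (mtrans C)) (mmul q B (mtrans D)) i j"
  proof (cases "i < 2*q \<and> j < 2*q")
    case True
    have d: "i div q < 2" "j div q < 2" using True
      by (simp_all add: less_mult_imp_div_less mult.commute)
    let ?S = "\<Sum>k<q. B (i mod q) k * D (j mod q) k"
    have a: "(\<Sum>k<q. kron q A B i k * mtrans (kron q C D) k j) = A (i div q) 0 * C (j div q) 0 * ?S"
      unfolding sum_distrib_left
      by (rule sum.cong) (simp_all add: kron_def mtrans_def mult_ac)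
    have b: "(\<Sum>k<q. kron q A B i (q+k) * mtrans (kron q C D) (q+k) j) = A (i div q) 1 * C (j div q) 1 * ?S"
      unfolding sum_distrib_left
      by (rule sum.cong) (simp_all add: kron_def mtrans_def divq mult_ac)
    have "mmul (2*q) (kron q A B) (mtrans (kron q C D)) i j =
       A (i div q) 0 * C (j div q) 0 * ?S + A (i div q) 1 * C (j div q) 1 * ?S"
      unfolding mmul_def if_P[OF True] sum_split2 a b ..
    also have "\<dots> = (A (i div q) 0 * C (j div q) 0 + A (i div q) 1 * C (j div q) 1) * ?S"
      by (simp add: distrib_right)
    also have "\<dots> = kron q (mmul 2 A (mtrans C)) (mmul q B (mtrans D)) i j"
    proof -
      have e1: "mmul 2 A (mtrans C) (i div q) (j div q) = A (i div q) 0 * C (j div q) 0 + A (i div q) 1 * C (j div q) 1"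
        using d unfolding mmul_def mtrans_def by (simp add: numeral_2_eq_2)
      have e2: "mmul q B (mtrans D) (i mod q) (j mod q) = ?S"
        using assms unfolding mmul_def mtrans_def by simp
      show ?thesis unfolding kron_def e1 e2 ..
    qed
    finally show ?thesis .
  next
    case False
    then have "i div q \<ge> 2 \<or> j div q \<ge> 2" using assms
      by (metis div_less_iff_less_mult leI mult.commute)
    then have "mmul 2 A (mtrans C) (i div q) (j div q) = 0" by (auto simp: mmul_def)
    moreover have "mmul (2*q) (kron q A B) (mtrans (kron q C D)) i j = 0"
      unfolding mmul_def by (rule if_not_P[OF False])
    ultimately show ?thesis by (simp add: kron_def)
  qed
qed


lemma two_pow_Suc: "(2::nat)^Suc n = 2 * 2^n" by simp

lemma KL_mmul: "length As = length Bs \<Longrightarrow>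
  mmul (2^length As) (kron_list As) (mtrans (kron_list Bs)) =
  kron_list (map (\<lambda>(A,B). mmul 2 A (mtrans B)) (zip As Bs))"
proof (induction As Bs rule: list_induct2)
  case Nil
  show ?case by (auto simp: mmul_def mtrans_def fun_eq_iff)
next
  case (Cons A As B Bs)
  have "mmul (2^length (A#As)) (kron_list (A#As)) (mtrans (kron_list (B#Bs))) =
    mmul (2*2^length As) (kron (2^length As) A (kron_list As)) (mtrans (kron (2^length As) B (kron_list Bs)))"
    using Cons by simp
  also have "\<dots> = kron (2^length As) (mmul 2 A (mtrans B)) (mmul (2^length As) (kron_list As) (mtrans (kron_list Bs)))"
    by (rule mmul_kron) simp
  finally show ?case using Cons by simp
qed

lemma KL_hp: "length As = length Bs \<Longrightarrow>
  hp (kron_list As) (kron_list Bs) = kron_list (map (\<lambda>(A,B). hp A B) (zip As Bs))"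
proof (induction As Bs rule: list_induct2)
  case Nil
  show ?case by (auto simp: hp_def fun_eq_iff)
next
  case (Cons A As B Bs)
  then show ?case by (simp add: hp_kron)
qed

lemma KL_trans: "mtrans (kron_list As) = kron_list (map mtrans As)"
proof (induction As)
  case Nil
  show ?case by (auto simp: mtrans_def fun_eq_iff)
next
  case (Cons A As)
  then show ?case by (simp add: trans_kron)
qed

lemma KL_nz: "nz (2^length As) (kron_list As) \<longleftrightarrow> (\<forall>A\<in>set As. nz 2 A)"
proof (induction As)
  case Nil
  show ?case by (auto simp: nz_def)
next
  case (Cons A As)
  have "nz (2^length (A#As)) (kron_list (A#As)) = nz (2*2^length As) (kron (2^length As) A (kron_list As))"
    by simp
  also have "\<dots> = (nz 2 A \<and> nz (2^length As) (kron_list As))" by (rule nz_kron) simp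
  finally show ?case using Cons by simp
qed

lemma KL_tr: "tr (2^length As) (kron_list As) = prod_list (map (tr 2) As)"
proof (induction As)
  case Nil
  show ?case by (simp add: tr_def)
next
  case (Cons A As)
  have "tr (2^length (A#As)) (kron_list (A#As)) = tr (2*2^length As) (kron (2^length As) A (kron_list As))"
    by simp
  also have "\<dots> = tr 2 A * tr (2^length As) (kron_list As)" by (rule tr_kron) simp
  finally show ?case using Cons by simp
qed

lemma KL_smul: "kron_list (map (\<lambda>x. smul (c x) (F x)) xs) = smul (prod_list (map c xs)) (kron_list (map F xs))"
proof (induction xs)
  case Nil
  show ?case by (auto simp: smul_def fun_eq_iff)
next
  case (Cons x xs)
  then show ?case by (simp add: smul_kron)
qed




definition enc :: "nat \<Rightarrow> bool \<times> bool" where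
  "enc s = (s = 1 \<or> s = 2, s = 1 \<or> s = 3)"
definition sg :: "nat \<Rightarrow> nat \<Rightarrow> int" where
  "sg s t = (if fst (enc s) \<noteq> fst (enc t) \<and> snd (enc s) \<noteq> snd (enc t) then -1 else 1)"

lemma lt4: "(s::nat) < 4 \<Longrightarrow> s = 0 \<or> s = 1 \<or> s = 2 \<or> s = 3" by auto
lemma lt2: "(s::nat) < 2 \<longleftrightarrow> s = 0 \<or> s = 1" by auto

lemma sum2: "(\<Sum>k<(2::nat). f k) = f 0 + (f 1 :: int)" by (simp add: numeral_2_eq_2)

lemma factor_supp: "\<not> (i < 2 \<and> j < 2) \<Longrightarrow> factor s i j = 0"
  by (auto simp: factor_def I2_def E1_def E2_def mmul_def)

lemma pm_supp: "\<not> (i < 2 \<and> j < 2) \<Longrightarrow> pm s t i j = 0"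
  by (auto simp: pm_def mmul_def)

lemma fvals:
  "factor 0 0 0 = 1" "factor 0 0 1 = 0" "factor 0 1 0 = 0" "factor 0 1 1 = 1"
  "factor 1 0 0 = 0" "factor 1 0 1 = -1" "factor 1 1 0 = 1" "factor 1 1 1 = 0"
  "factor 2 0 0 = 0" "factor 2 0 1 = 1" "factor 2 1 0 = 1" "factor 2 1 1 = 0"
  "factor 3 0 0 = -1" "factor 3 0 1 = 0" "factor 3 1 0 = 0" "factor 3 1 1 = 1"
  by (simp_all add: factor_def I2_def E1_def E2_def mmul_def sum2)

lemmas fvals2 = fvals[unfolded One_nat_def]

lemma pm_val: "i < 2 \<Longrightarrow> j < 2 \<Longrightarrow> pm s t i j = factor s i 0 * factor t j 0 + factor s i 1 * factor t j 1"
  by (simp add: pm_def mmul_def mtrans_def sum2)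

lemma C1: assumes "s < 4" "t < 4" shows "mtrans (pm s t) = smul (sg s t) (pm s t)"
proof (intro ext)
  fix i j
  show "mtrans (pm s t) i j = smul (sg s t) (pm s t) i j"
  proof (cases "i < 2 \<and> j < 2")
    case True
    then have "i = 0 \<or> i = 1" "j = 0 \<or> j = 1" by auto
    then show ?thesis using lt4[OF assms(1)] lt4[OF assms(2)] True
      unfolding mtrans_def smul_def
      by (elim disjE) (simp_all add: pm_val fvals fvals2 sg_def enc_def)
  next
    case False
    then show ?thesis by (auto simp: mtrans_def smul_def pm_supp)
  qed
qed

lemma C2: assumes "s < 4" "t < 4" shows "nz 2 (pm s t)"
proof -
  have "pm s t 0 0 \<noteq> 0 \<or> pm s t 0 1 \<noteq> 0"
    using lt4[OF assms(1)] lt4[OF assms(2)] by (elim disjE) (simp_all add: pm_val fvals fvals2)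
  then show ?thesis unfolding nz_def by force
qed

lemma nz2: "nz 2 A \<longleftrightarrow> A 0 0 \<noteq> 0 \<or> A 0 1 \<noteq> 0 \<or> A 1 0 \<noteq> 0 \<or> A 1 1 \<noteq> 0"
  unfolding nz_def lt2 by auto

lemma C3: assumes "s < 4" "t < 4" shows "nz 2 (hp (factor s) (factor t)) \<longleftrightarrow> fst (enc s) = fst (enc t)"
  using lt4[OF assms(1)] lt4[OF assms(2)]
  unfolding nz2 hp_def by (elim disjE) (simp_all add: fvals fvals2 enc_def)

lemma C4: assumes "s < 4" "t < 4" shows "tr 2 (pm s t) = (if s = t then 2 else 0)"
  using lt4[OF assms(1)] lt4[OF assms(2)]
  unfolding tr_def sum2 by (elim disjE) (simp_all add: pm_val fvals fvals2)




type_synonym vec = "(bool \<times> bool) list"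

definition xorv :: "vec \<Rightarrow> vec \<Rightarrow> vec" where
  "xorv v w = map (\<lambda>(p,r). (fst p \<noteq> fst r, snd p \<noteq> snd r)) (zip v w)"

fun qv :: "vec \<Rightarrow> bool" where
  "qv [] = False"
| "qv (p#v) = ((fst p \<and> snd p) \<noteq> qv v)"

definition V :: "nat list \<Rightarrow> vec" where "V a = map enc a"

definition L :: "nat \<Rightarrow> nat list set" where "L m = {ts. length ts = m \<and> set ts \<subseteq> {0..<4}}"

lemma basis_L: "basis m = M ` L m"
  unfolding basis_def L_def M_def by auto

lemma sign_lemma: "length a = length b \<Longrightarrow>
  prod_list (map (\<lambda>(s,t). sg s t) (zip a b)) = (if qv (xorv (V a) (V b)) then -1 else 1)"
proof (induction a b rule: list_induct2)
  case Nil
  then show ?case by (simp add: xorv_def V_def)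
next
  case (Cons x xs y ys)
  have e: "xorv (V (x#xs)) (V (y#ys)) = (fst (enc x) \<noteq> fst (enc y), snd (enc x) \<noteq> snd (enc y)) # xorv (V xs) (V ys)"
    by (simp add: xorv_def V_def)
  show ?case unfolding e using Cons.IH by (simp add: sg_def)
qed

lemma zipall: "length a = length b \<Longrightarrow> (\<forall>(s,t)\<in>set (zip a b). f s = f t) \<longleftrightarrow> map f a = map f b"
  by (induction a b rule: list_induct2) simp_all

lemma zip_lt4: assumes "a \<in> L m" "b \<in> L m" "(s,t) \<in> set (zip a b)" shows "s < 4" "t < 4"
  using assms set_zip_leftD[OF assms(3)] set_zip_rightD[OF assms(3)] by (auto simp: L_def)

lemma L_len: "a \<in> L m \<Longrightarrow> length a = m" by (simp add: L_def)

definition KK :: "nat list \<Rightarrow> nat list \<Rightarrow> mat" where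
  "KK a b = kron_list (map (\<lambda>(s,t). pm s t) (zip a b))"

lemma MM: assumes "a \<in> L m" "b \<in> L m"
  shows "mmul (2^m) (M a) (mtrans (M b)) = KK a b"
proof -
  have "mmul (2^m) (M a) (mtrans (M b)) = kron_list (map (\<lambda>(A,B). mmul 2 A (mtrans B)) (zip (map factor a) (map factor b)))"
    unfolding M_def using KL_mmul[of "map factor a" "map factor b"] L_len[OF assms(1)] L_len[OF assms(2)] by simp
  also have "\<dots> = KK a b" unfolding KK_def zip_map_map map_map
    apply (rule arg_cong[where f=kron_list])
    apply (rule map_cong[OF refl])
    by (auto simp: pm_def)
  finally show ?thesis .
qed

lemma transK: assumes "a \<in> L m" "b \<in> L m"
  shows "mtrans (KK a b) = smul (if qv (xorv (V a) (V b)) then -1 else 1) (KK a b)"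
proof -
  have "mtrans (KK a b) = kron_list (map (\<lambda>x. mtrans (case x of (s,t) \<Rightarrow> pm s t)) (zip a b))"
    unfolding KK_def KL_trans map_map
    apply (rule arg_cong[where f=kron_list])
    apply (rule map_cong[OF refl])
    by auto
  also have "\<dots> = kron_list (map (\<lambda>x. smul (case x of (s,t) \<Rightarrow> sg s t) (case x of (s,t) \<Rightarrow> pm s t)) (zip a b))"
    apply (rule arg_cong[where f=kron_list])
    apply (rule map_cong[OF refl])
    using C1 zip_lt4[OF assms] by auto
  also have "\<dots> = smul (prod_list (map (\<lambda>(s,t). sg s t) (zip a b))) (KK a b)"
    unfolding KL_smul KK_def by simp
  also have "prod_list (map (\<lambda>(s,t). sg s t) (zip a b)) = (if qv (xorv (V a) (V b)) then -1 else 1)"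
    using L_len[OF assms(1)] L_len[OF assms(2)] by (intro sign_lemma) simp
  finally show ?thesis .
qed

lemma nzK: assumes "a \<in> L m" "b \<in> L m" shows "nz (2^m) (KK a b)"
proof -
  have "nz (2^length (map (\<lambda>(s,t). pm s t) (zip a b))) (KK a b)"
    unfolding KK_def KL_nz using C2 zip_lt4[OF assms] by auto
  then show ?thesis using L_len[OF assms(1)] L_len[OF assms(2)] by simp
qed

lemma symskew: assumes "mtrans K = smul \<sigma> K" "\<sigma> = 1 \<or> \<sigma> = -1" "nz n K"
  shows "(symmetric_mat n K \<longleftrightarrow> \<sigma> = 1) \<and> (skew_mat n K \<longleftrightarrow> \<sigma> = -1)"
proof -
  have e: "K j i = \<sigma> * K i j" for i j using fun_cong[OF fun_cong[OF assms(1)], of i j]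
    by (simp add: mtrans_def smul_def)
  obtain i j where ij: "i<n" "j<n" "K i j \<noteq> 0" using assms(3) by (auto simp: nz_def)
  have eij: "K j i = \<sigma> * K i j" by (rule e)
  show ?thesis using assms(2)
  proof
    assume s: "\<sigma> = 1"
    have "\<not> skew_mat n K"
    proof
      assume "skew_mat n K"
      then have "K j i = - K i j" using ij unfolding skew_mat_def by blast
      then show False using eij s ij(3) by simp
    qed
    moreover have "symmetric_mat n K" unfolding symmetric_mat_def
    proof (intro allI impI)
      fix i j show "K j i = K i j" using e[of j i] s by simp
    qed
    ultimately show ?thesis using s by simp
  next
    assume s: "\<sigma> = -1"
    have "\<not> symmetric_mat n K"
    proof
      assume "symmetric_mat n K"
      then have "K j i = K i j" using ij unfolding symmetric_mat_def by blast
      then show False using eij s ij(3) by simp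
    qed
    moreover have "skew_mat n K" unfolding skew_mat_def
    proof (intro allI impI)
      fix i j show "K j i = - K i j" using e[of j i] s by simp
    qed
    ultimately show ?thesis using s by simp
  qed
qed

lemma amic_iff: assumes "a \<in> L m" "b \<in> L m"
  shows "amicable (2^m) (M a) (M b) \<longleftrightarrow> \<not> qv (xorv (V a) (V b))"
    and "anti_amicable (2^m) (M a) (M b) \<longleftrightarrow> qv (xorv (V a) (V b))"
proof -
  have "(if qv (xorv (V a) (V b)) then -1 else 1) = (1::int) \<or> (if qv (xorv (V a) (V b)) then -1 else 1) = (-1::int)"
    by simp
  note h = symskew[OF transK[OF assms] this nzK[OF assms]]
  show "amicable (2^m) (M a) (M b) \<longleftrightarrow> \<not> qv (xorv (V a) (V b))"
    unfolding amicable_def MM[OF assms] using h by (cases "qv (xorv (V a) (V b))") simp_all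
  show "anti_amicable (2^m) (M a) (M b) \<longleftrightarrow> qv (xorv (V a) (V b))"
    unfolding anti_amicable_def MM[OF assms] using h by (cases "qv (xorv (V a) (V b))") simp_all
qed

lemma disj_iff: assumes "a \<in> L m" "b \<in> L m"
  shows "disjoint_support (2^m) (M a) (M b) \<longleftrightarrow> map fst (V a) \<noteq> map fst (V b)"
proof -
  have la: "length a = m" "length b = m" using assms by (auto simp: L_def)
  have "disjoint_support (2^m) (M a) (M b) \<longleftrightarrow> \<not> nz (2^m) (hp (M a) (M b))"
    unfolding disjoint_support_def nz_def hp_def by auto
  also have "hp (M a) (M b) = kron_list (map (\<lambda>(s,t). hp (factor s) (factor t)) (zip a b))"
    unfolding M_def KL_hp[of "map factor a" "map factor b", simplified, OF la(1)[folded la(2)]]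
       zip_map_map map_map
    apply (rule arg_cong[where f=kron_list])
    apply (rule map_cong[OF refl])
    by auto
  also have "nz (2^m) \<dots> \<longleftrightarrow> (\<forall>(s,t)\<in>set (zip a b). nz 2 (hp (factor s) (factor t)))"
    using KL_nz[of "map (\<lambda>(s,t). hp (factor s) (factor t)) (zip a b)"] la
    by (simp only: length_map length_zip min.idem set_map ball_simps) (simp add: split_def)
  also have "\<dots> \<longleftrightarrow> (\<forall>(s,t)\<in>set (zip a b). (fst \<circ> enc) s = (fst \<circ> enc) t)"
    apply (rule ball_cong[OF refl])
    subgoal for x using C3[OF zip_lt4[OF assms, of "fst x" "snd x"]] by (cases x) simp
    done
  also have "\<dots> \<longleftrightarrow> map (fst \<circ> enc) a = map (fst \<circ> enc) b" using zipall la by metis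
  finally show ?thesis by (simp add: V_def)
qed

lemma M_inj: assumes "a \<in> L m" "b \<in> L m" "M a = M b" shows "a = b"
proof -
  have la: "length a = m" "length b = m" using assms by (auto simp: L_def)
  have tr: "tr (2^m) (KK a c) = prod_list (map (\<lambda>(s,t). if s = t then 2 else 0) (zip a c))"
    if "c \<in> L m" for c
  proof -
    have lc: "length c = m" using that by (simp add: L_def)
    have "tr (2^m) (KK a c) = prod_list (map (tr 2) (map (\<lambda>(s,t). pm s t) (zip a c)))"
      unfolding KK_def using KL_tr[of "map (\<lambda>(s,t). pm s t) (zip a c)"] la lc by simp
    also have "\<dots> = prod_list (map (\<lambda>(s,t). if s = t then 2 else 0) (zip a c))"
      apply (simp only: map_map)
      apply (rule arg_cong[where f=prod_list])
      apply (rule map_cong[OF refl])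
      using C4 zip_lt4[OF assms(1) that] by auto
    finally show ?thesis .
  qed
  have "KK a b = KK a a" using MM[OF assms(1,2)] MM[OF assms(1,1)] assms(3) by simp
  then have "prod_list (map (\<lambda>(s,t). if s = t then (2::int) else 0) (zip a b)) =
             prod_list (map (\<lambda>(s,t). if s = t then 2 else 0) (zip a a))"
    using tr[OF assms(2)] tr[OF assms(1)] by simp
  moreover have "prod_list (map (\<lambda>(s,t). if s = t then (2::int) else 0) (zip a a)) \<noteq> 0"
    by (auto simp: prod_list_zero_iff in_set_zip)
  ultimately have "prod_list (map (\<lambda>(s,t). if s = t then (2::int) else 0) (zip a b)) \<noteq> 0"
    by simp
  then have "0 \<notin> set (map (\<lambda>(s,t). if s = t then (2::int) else 0) (zip a b))"
    by (simp only: prod_list_zero_iff) simp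
  then have "\<forall>(s,t)\<in>set (zip a b). s = t"
    by (force split: if_splits)
  then have "map id a = map id b" using zipall[of a b id] la by auto
  then show ?thesis by simp
qed

lemma red_iff: assumes "a \<in> L m" "b \<in> L m"
  shows "red m (M a) (M b) \<longleftrightarrow> map fst (V a) \<noteq> map fst (V b) \<and> qv (xorv (V a) (V b))"
proof -
  have "map fst (V a) \<noteq> map fst (V b) \<Longrightarrow> M a \<noteq> M b" using M_inj[OF assms] by auto
  then show ?thesis unfolding red_def basis_L using assms disj_iff[OF assms] amic_iff[OF assms] by auto
qed

lemma blue_iff: assumes "a \<in> L m" "b \<in> L m"
  shows "blue m (M a) (M b) \<longleftrightarrow> map fst (V a) \<noteq> map fst (V b) \<and> \<not> qv (xorv (V a) (V b))"
proof -
  have "map fst (V a) \<noteq> map fst (V b) \<Longrightarrow> M a \<noteq> M b" using M_inj[OF assms] by auto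
  then show ?thesis unfolding blue_def basis_L using assms disj_iff[OF assms] amic_iff[OF assms] by auto
qed




fun om :: "vec \<Rightarrow> vec \<Rightarrow> bool" where
  "om (p#v) (r#w) = (((fst p \<and> snd r) \<noteq> (fst r \<and> snd p)) \<noteq> om v w)"
| "om _ _ = False"

definition zv :: "nat \<Rightarrow> vec" where "zv m = replicate m (False, False)"

lemma xorv_Cons[simp]: "xorv (p#v) (r#w) = (fst p \<noteq> fst r, snd p \<noteq> snd r) # xorv v w"
  by (simp add: xorv_def)
lemma xorv_Nil[simp]: "xorv [] w = []" "xorv v [] = []"
  by (simp_all add: xorv_def)
lemma len_xorv[simp]: "length (xorv v w) = min (length v) (length w)"
  by (simp add: xorv_def)

lemma xorv_comm: "xorv v w = xorv w v"
  unfolding xorv_def by (induction v w rule: list_induct2') auto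

lemma xorv_assoc: "xorv (xorv u v) w = xorv u (xorv v w)"
proof (induction u arbitrary: v w)
  case Nil then show ?case by simp
next
  case (Cons p u)
  then show ?case by (cases v; cases w) auto
qed

lemma xorv_self: "xorv v v = zv (length v)"
  by (induction v) (auto simp: zv_def)

lemma xorv_zv: "length v = m \<Longrightarrow> xorv v (zv m) = v"
  by (induction v arbitrary: m) (auto simp: zv_def)

lemma xorv_cancel: "length w = length v \<Longrightarrow> xorv v (xorv v w) = w"
  by (metis xorv_assoc xorv_self xorv_comm xorv_zv)

lemma q_xorv: "length v = length w \<Longrightarrow> qv (xorv v w) = ((qv v \<noteq> qv w) \<noteq> om v w)"
  by (induction v w rule: list_induct2) auto

lemma om_self: "om v v = False"
  by (induction v) auto

lemma om_xorv: "length u = length w \<Longrightarrow> length v = length w \<Longrightarrow> om (xorv u v) w = (om u w \<noteq> om v w)"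
proof (induction u arbitrary: v w)
  case Nil then show ?case by simp
next
  case (Cons p u)
  then show ?case by (cases v; cases w) auto
qed

lemma om_zv: "om (zv m) w = False"
  by (induction m arbitrary: w) (auto simp: zv_def elim: om.elims)

fun sel :: "nat \<Rightarrow> bool list \<Rightarrow> vec list \<Rightarrow> vec" where
  "sel m (c#cs) (u#us) = (if c then xorv u (sel m cs us) else sel m cs us)"
| "sel m _ _ = zv m"

lemma len_sel: "\<forall>u\<in>set us. length u = m \<Longrightarrow> length (sel m cs us) = m"
  by (induction m cs us rule: sel.induct) (auto simp: zv_def)

lemma om_sel: "\<forall>u\<in>set us. length u = m \<Longrightarrow> length w = m \<Longrightarrow>
  om (sel m cs us) w = odd (length (filter (\<lambda>(c,u). c \<and> om u w) (zip cs us)))"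
proof (induction m cs us rule: sel.induct)
  case (1 m c cs u us)
  have l: "length (sel m cs us) = m" using len_sel 1(3) by simp
  show ?case using 1 l by (auto simp: om_xorv)
qed (auto simp: om_zv)


definition pw :: "vec list \<Rightarrow> bool" where
  "pw us \<longleftrightarrow> (\<forall>u\<in>set us. \<forall>u'\<in>set us. u \<noteq> u' \<longrightarrow> om u u')"

lemma cnt:
  assumes d: "distinct us" and l: "\<forall>u\<in>set us. length u = m" and p: "pw us"
    and lc: "length cs = length us" and j: "j < length us"
  shows "om (sel m cs us) (us!j) = (odd (card {i. i < length us \<and> cs!i}) \<noteq> cs!j)"
proof -
  let ?A = "{i. i < length us \<and> cs!i}"
  have lw: "length (us!j) = m" using l j by simp
  have "om (sel m cs us) (us!j) = odd (length (filter (\<lambda>(c,u). c \<and> om u (us!j)) (zip cs us)))"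
    by (rule om_sel[OF l lw])
  also have "length (filter (\<lambda>(c,u). c \<and> om u (us!j)) (zip cs us)) =
       card {i. i < length (zip cs us) \<and> (\<lambda>(c,u). c \<and> om u (us!j)) (zip cs us ! i)}"
    by (rule length_filter_conv_card)
  also have "{i. i < length (zip cs us) \<and> (\<lambda>(c,u). c \<and> om u (us!j)) (zip cs us ! i)} = ?A - {j}"
  proof -
    have "om (us!i) (us!j) = (i \<noteq> j)" if "i < length us" for i
    proof (cases "i = j")
      case True then show ?thesis by (simp add: om_self)
    next
      case False
      then have "us!i \<noteq> us!j" using d that j by (simp add: nth_eq_iff_index_eq)
      then show ?thesis using p that j False unfolding pw_def by auto
    qed
    then show ?thesis using lc by auto
  qed
  also have "card (?A - {j}) = card ?A - (if cs!j then 1 else 0)"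
    using j by (auto simp: card_Diff_singleton)
  finally have e: "om (sel m cs us) (us!j) = odd (card ?A - (if cs!j then 1 else 0))" .
  show ?thesis
  proof (cases "cs!j")
    case True
    have "j \<in> ?A" using True j by simp
    moreover have "finite ?A" by simp
    ultimately have "0 < card ?A" using card_gt_0_iff by blast
    then have "odd (card ?A - 1) = (\<not> odd (card ?A))" by (cases "card ?A") auto
    then show ?thesis using e True by (simp only: if_True) simp
  next
    case False then show ?thesis using e by simp
  qed
qed

lemma sel_inj:
  assumes d: "distinct us" and l: "\<forall>u\<in>set us. length u = m" and p: "pw us"
    and ev: "even (length us)"
    and lc: "length cs = length us" and lc': "length cs' = length us"
    and eq: "sel m cs us = sel m cs' us"
  shows "cs = cs'"
proof (rule ccontr)
  assume ne: "cs \<noteq> cs'"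
  let ?N = "card {i. i < length us \<and> cs!i}"
  let ?N' = "card {i. i < length us \<and> cs'!i}"
  have key: "(odd ?N \<noteq> cs!j) = (odd ?N' \<noteq> cs'!j)" if "j < length us" for j
    using cnt[OF d l p lc that] cnt[OF d l p lc' that] eq by simp
  have "\<exists>j. j < length us \<and> cs!j \<noteq> cs'!j"
  proof (rule ccontr)
    assume "\<nexists>j. j < length us \<and> cs!j \<noteq> cs'!j"
    then have "cs = cs'" using lc lc' by (intro nth_equalityI) auto
    then show False using ne by simp
  qed
  then obtain j where j: "j < length us" "cs!j \<noteq> cs'!j" by blast
  have o: "odd ?N \<noteq> odd ?N'" using key[OF j(1)] j(2) by blast
  show False
  proof (cases "\<exists>k<length us. cs!k = cs'!k")
    case True
    then obtain k where k: "k < length us" "cs!k = cs'!k" by blast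
    have "(odd ?N \<noteq> cs!k) = (odd ?N' \<noteq> cs'!k)" by (rule key[OF k(1)])
    then have "odd ?N = odd ?N'" using k(2) by blast
    then show False using o by blast
  next
    case False
    then have "{i. i < length us \<and> cs'!i} = {..<length us} - {i. i < length us \<and> cs!i}" by auto
    moreover have sub: "{i. i < length us \<and> cs!i} \<subseteq> {..<length us}" by auto
    ultimately have "?N' = card {..<length us} - ?N"
      by (simp add: card_Diff_subset)
    then have "?N' = length us - ?N" by simp
    moreover have "?N \<le> card {..<length us}"
      using sub by (rule card_mono[rotated]) simp
    then have "?N \<le> length us" by simp
    ultimately have "odd ?N' = odd ?N" using ev by presburger
    then show False using o by simp
  qed
qed

lemma card_bb: "card (UNIV :: (bool \<times> bool) set) = 4"
proof -
  have e: "(UNIV :: (bool \<times> bool) set) = {(False,False),(False,True),(True,False),(True,True)}"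
    by auto
  show ?thesis unfolding e by simp
qed

lemma anticomm_bound:
  assumes d: "distinct us" and l: "\<forall>u\<in>set us. length u = m" and p: "pw us"
    and ev: "even (length us)"
  shows "2 ^ length us \<le> (4::nat) ^ m"
proof -
  let ?C = "{cs::bool list. set cs \<subseteq> UNIV \<and> length cs = length us}"
  let ?W = "{v::vec. set v \<subseteq> UNIV \<and> length v = m}"
  have inj: "inj_on (\<lambda>cs. sel m cs us) ?C"
  proof (rule inj_onI)
    fix x y assume "x \<in> ?C" "y \<in> ?C" "sel m x us = sel m y us"
    then show "x = y" using sel_inj[OF d l p ev, of x y] by simp
  qed
  have sub: "(\<lambda>cs. sel m cs us) ` ?C \<subseteq> ?W" using len_sel[OF l] by auto
  have fin: "finite ?W" by (rule finite_lists_length_eq) simp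
  have "card ?C \<le> card ?W" by (rule card_inj_on_le[OF inj sub fin])
  moreover have "card ?C = 2 ^ length us"
    using card_lists_length_eq[of "UNIV :: bool set" "length us"] by (simp add: card_UNIV_bool)
  moreover have "card ?W = 4 ^ m"
    using card_lists_length_eq[of "UNIV :: (bool \<times> bool) set" m] by (simp add: card_bb)
  ultimately show ?thesis by simp
qed




lemma pow_ge: "4 \<le> m \<Longrightarrow> 2*m+3 \<le> (2::nat)^m"
proof (induction m rule: dec_induct)
  case base then show ?case by simp
next
  case (step n) then show ?case by simp
qed

lemma len_V[simp]: "length (V a) = length a" by (simp add: V_def)

lemma enc_inj: "inj_on enc {0..<4}"
proof (rule inj_onI)
  fix x y assume "x \<in> {0..<(4::nat)}" "y \<in> {0..<4}" "enc x = enc y"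
  then show "x = y" using lt4[of x] lt4[of y] by (auto simp: enc_def)
qed

lemma V_inj: assumes "a \<in> L m" "b \<in> L m" "V a = V b" shows "a = b"
proof -
  have "inj_on enc (set a \<union> set b)" using assms(1,2) by (auto simp: L_def intro: inj_on_subset[OF enc_inj])
  then show ?thesis using assms(3) inj_on_map_eq_map unfolding V_def by blast
qed

lemma xorv_xx: "length v = length w \<Longrightarrow> length v' = length w \<Longrightarrow>
  xorv (xorv w v) (xorv w v') = xorv v v'"
proof -
  assume l: "length v = length w" "length v' = length w"
  have "xorv (xorv w v) (xorv w v') = xorv w (xorv v (xorv w v'))" by (rule xorv_assoc)
  also have "xorv v (xorv w v') = xorv w (xorv v v')"
    by (metis xorv_assoc xorv_comm)
  also have "xorv w (xorv w (xorv v v')) = xorv v v'" using l by (simp add: xorv_cancel)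
  finally show ?thesis .
qed

lemma no_red_clique:
  assumes m: "m \<ge> 4" and S: "S \<subseteq> basis m" "card S = 2^m"
    and R: "\<forall>x\<in>S. \<forall>y\<in>S. x \<noteq> y \<longrightarrow> red m x y"
  shows False
proof -
  define A where "A = {a\<in>L m. M a \<in> S}"
  have MA: "M ` A = S" using S(1) unfolding A_def basis_L by auto
  have injM: "inj_on M A" by (rule inj_onI) (auto simp: A_def intro: M_inj)
  have injV: "inj_on V A" by (rule inj_onI) (auto simp: A_def intro: V_inj)
  define W where "W = V ` A"
  have cW: "card W = 2^m" unfolding W_def using card_image[OF injV] card_image[OF injM] MA S(2) by simp
  have lW: "\<forall>v\<in>W. length v = m" unfolding W_def A_def by (auto simp: L_def)
  have pW: "map fst v \<noteq> map fst w \<and> qv (xorv v w)" if h: "v \<in> W" "w \<in> W" "v \<noteq> w" for v w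
  proof -
    obtain a b where ab: "a \<in> A" "b \<in> A" "v = V a" "w = V b" using h(1,2) unfolding W_def by blast
    then have "a \<noteq> b" using h by auto
    then have "M a \<noteq> M b" using injM ab by (auto dest: inj_onD)
    then have "red m (M a) (M b)" using R ab unfolding A_def by auto
    then show ?thesis using red_iff[of a m b] ab unfolding A_def by auto
  qed
  have "W \<noteq> {}" using cW by (metis card.empty less_numeral_extra(3) zero_less_power zero_less_numeral)
  then obtain w0 where w0: "w0 \<in> W" by auto
  define U where "U = (\<lambda>v. xorv w0 v) ` (W - {w0})"
  have fW: "finite W" using cW by (metis card.infinite power_not_zero zero_neq_numeral)
  have injX: "inj_on (\<lambda>v. xorv w0 v) (W - {w0})"
  proof (rule inj_onI)
    fix x y assume "x \<in> W - {w0}" "y \<in> W - {w0}" "xorv w0 x = xorv w0 y"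
    then have "length x = length w0" "length y = length w0" using lW w0 by auto
    then show "x = y" using xorv_cancel[of x w0] xorv_cancel[of y w0] \<open>xorv w0 x = xorv w0 y\<close> by metis
  qed
  have cU: "card U = 2^m - 1" unfolding U_def using card_image[OF injX] cW fW w0 by simp
  have lU: "\<forall>u\<in>U. length u = m" unfolding U_def using lW w0 by auto
  have pU: "om u u'" if h: "u \<in> U" "u' \<in> U" "u \<noteq> u'" for u u'
  proof -
    obtain v v' where vv: "v \<in> W" "v' \<in> W" "v \<noteq> w0" "v' \<noteq> w0" "u = xorv w0 v" "u' = xorv w0 v'"
      using h(1,2) unfolding U_def by blast
    then have "v \<noteq> v'" using h by auto
    have q1: "qv u" using pW[OF w0 vv(1)] vv by auto
    have q2: "qv u'" using pW[OF w0 vv(2)] vv by auto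
    have "xorv u u' = xorv v v'" using vv lW w0 by (simp add: xorv_xx)
    then have q3: "qv (xorv u u')" using pW[OF vv(1,2) \<open>v \<noteq> v'\<close>] by simp
    have "length u = length u'" using lU h by simp
    then show ?thesis using q_xorv[of u u'] q1 q2 q3 by simp
  qed
  have "2*m+2 \<le> card U" using cU pow_ge[OF m] by simp
  then obtain U' where U': "U' \<subseteq> U" "card U' = 2*m+2" "finite U'" by (rule obtain_subset_with_card_n)
  obtain us where us: "set us = U'" "distinct us" using finite_distinct_list[OF U'(3)] by blast
  have lus: "length us = 2*m+2" using distinct_card[OF us(2)] us(1) U'(2) by simp
  have "2 ^ length us \<le> (4::nat) ^ m"
  proof (rule anticomm_bound[OF us(2)])
    show "\<forall>u\<in>set us. length u = m" using lU U' us by auto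
    show "pw us" unfolding pw_def using pU U' us by auto
    show "even (length us)" using lus by simp
  qed
  then have "2^(2*m+2) \<le> (2::nat)^(2*m)" using lus by (simp add: power_mult)
  then show False by simp
qed




definition Bl :: "nat \<Rightarrow> nat list set" where "Bl m = {ts. set ts \<subseteq> {0,2} \<and> length ts = m}"
definition Tb :: "nat \<Rightarrow> mat set" where "Tb m = M ` Bl m"

lemma Bl_L: "Bl m \<subseteq> L m" by (auto simp: Bl_def L_def)

lemma qv_nosnd: "\<forall>p\<in>set v. \<not> snd p \<Longrightarrow> \<forall>p\<in>set w. \<not> snd p \<Longrightarrow> \<not> qv (xorv v w)"
proof (induction v arbitrary: w)
  case Nil then show ?case by simp
next
  case (Cons p v) then show ?case by (cases w) auto
qed

lemma Tb_props: "Tb m \<subseteq> basis m" "card (Tb m) = 2^m" "\<forall>x\<in>Tb m. \<forall>y\<in>Tb m. x \<noteq> y \<longrightarrow> blue m x y"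
proof -
  show "Tb m \<subseteq> basis m" unfolding Tb_def basis_L using Bl_L by auto
  have injM: "inj_on M (Bl m)" by (rule inj_onI) (use Bl_L M_inj in blast)
  have "card (Bl m) = 2^m" unfolding Bl_def by (simp add: card_lists_length_eq numeral_2_eq_2)
  then show "card (Tb m) = 2^m" unfolding Tb_def using card_image[OF injM] by simp
  show "\<forall>x\<in>Tb m. \<forall>y\<in>Tb m. x \<noteq> y \<longrightarrow> blue m x y"
  proof (intro ballI impI)
    fix x y assume xy: "x \<in> Tb m" "y \<in> Tb m" "x \<noteq> y"
    then obtain a b where ab: "a \<in> Bl m" "b \<in> Bl m" "x = M a" "y = M b" unfolding Tb_def by blast
    then have ne: "a \<noteq> b" using xy by auto
    have inj: "inj_on (fst \<circ> enc) (set a \<union> set b)"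
      using ab(1,2) by (auto simp: Bl_def enc_def inj_on_def)
    have "map fst (V a) \<noteq> map fst (V b)"
      using ne inj_on_map_eq_map[OF inj] by (simp add: V_def)
    moreover have "\<not> qv (xorv (V a) (V b))"
      by (rule qv_nosnd) (use ab(1,2) in \<open>auto simp: Bl_def V_def enc_def\<close>)
    ultimately show "blue m x y" using blue_iff[of a m b] ab Bl_L by auto
  qed
qed

lemma Tb_transversal: "transversal m (Tb m)"
  unfolding transversal_def using Tb_props by blast

lemma part1: assumes "m \<ge> 4"
  shows "\<not> (\<exists>S'. transversal m S' \<and> ec_isomorphic (induced m S') (colour_complement (induced m (Tb m))))"
proof
  assume "\<exists>S'. transversal m S' \<and> ec_isomorphic (induced m S') (colour_complement (induced m (Tb m)))"
  then obtain S' f where S': "transversal m S'" and iso: "ec_iso (induced m S') (colour_complement (induced m (Tb m))) f"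
    unfolding ec_isomorphic_def by blast
  have bij: "bij_betw f S' (Tb m)" and col: "\<forall>x\<in>S'. \<forall>y\<in>S'. (red m x y \<longleftrightarrow> f x \<in> Tb m \<and> f y \<in> Tb m \<and> blue m (f x) (f y))"
    using iso unfolding ec_iso_def induced_def colour_complement_def by auto
  have "\<forall>x\<in>S'. \<forall>y\<in>S'. x \<noteq> y \<longrightarrow> red m x y"
  proof (intro ballI impI)
    fix x y assume xy: "x \<in> S'" "y \<in> S'" "x \<noteq> y"
    then have "f x \<noteq> f y" "f x \<in> Tb m" "f y \<in> Tb m" using bij by (auto simp: bij_betw_def inj_on_def)
    then have "blue m (f x) (f y)" using Tb_props(3) by blast
    then show "red m x y" using col xy \<open>f x \<in> Tb m\<close> \<open>f y \<in> Tb m\<close> by blast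
  qed
  then show False using no_red_clique[OF assms] S' unfolding transversal_def by blast
qed

lemma no_swap: assumes "m \<ge> 4"
  shows "\<not> (\<exists>\<pi>. bij_betw \<pi> (basis m) (basis m) \<and>
              (\<forall>A\<in>basis m. \<forall>B\<in>basis m.
                  (blue m A B \<longrightarrow> red m (\<pi> A) (\<pi> B)) \<and>
                  (red m A B \<longrightarrow> blue m (\<pi> A) (\<pi> B))))"
proof
  assume "\<exists>\<pi>. bij_betw \<pi> (basis m) (basis m) \<and>
              (\<forall>A\<in>basis m. \<forall>B\<in>basis m.
                  (blue m A B \<longrightarrow> red m (\<pi> A) (\<pi> B)) \<and>
                  (red m A B \<longrightarrow> blue m (\<pi> A) (\<pi> B)))"
  then obtain \<pi> where bij: "bij_betw \<pi> (basis m) (basis m)"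
    and c: "\<forall>A\<in>basis m. \<forall>B\<in>basis m. (blue m A B \<longrightarrow> red m (\<pi> A) (\<pi> B))" by blast
  have inj: "inj_on \<pi> (Tb m)" using bij Tb_props(1) by (auto simp: bij_betw_def intro: inj_on_subset)
  have "\<pi> ` Tb m \<subseteq> basis m" using bij Tb_props(1) by (auto simp: bij_betw_def)
  moreover have "card (\<pi> ` Tb m) = 2^m" using card_image[OF inj] Tb_props(2) by simp
  moreover have "\<forall>x\<in>\<pi> ` Tb m. \<forall>y\<in>\<pi> ` Tb m. x \<noteq> y \<longrightarrow> red m x y"
  proof (intro ballI impI)
    fix x y assume "x \<in> \<pi> ` Tb m" "y \<in> \<pi> ` Tb m" "x \<noteq> y"
    then obtain a b where "a \<in> Tb m" "b \<in> Tb m" "x = \<pi> a" "y = \<pi> b" "a \<noteq> b" by blast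
    then show "red m x y" using c Tb_props(1,3) by blast
  qed
  ultimately show False using no_red_clique[OF assms] by blast
qed




fun dotb :: "bool list \<Rightarrow> bool list \<Rightarrow> bool" where
  "dotb (a#x) (b#z) = ((a \<and> b) \<noteq> dotb x z)"
| "dotb _ _ = False"

definition xb :: "bool list \<Rightarrow> bool list \<Rightarrow> bool list" where
  "xb x y = map (\<lambda>(a,b). a \<noteq> b) (zip x y)"

fun g1 :: "bool list \<Rightarrow> bool list" where
  "g1 [a] = [a]" | "g1 x = x"
fun g2 :: "bool list \<Rightarrow> bool list" where
  "g2 [a,b] = [a \<noteq> b, b]" | "g2 x = x"
fun g3 :: "bool list \<Rightarrow> bool list" where
  "g3 [a,b,c] = (if a then (if b then (if c then [False,True,False] else [True,False,True])
                           else (if c then [True,False,False] else [True,True,True]))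
                else (if b then (if c then [True,True,False] else [False,True,True])
                           else (if c then [False,False,True] else [False,False,False])))"
| "g3 x = x"

definition gg :: "nat \<Rightarrow> bool list \<Rightarrow> bool list" where
  "gg m x = (if m = 1 then g1 x else if m = 2 then g2 x else g3 x)"

lemma len3: "length x = 3 \<longleftrightarrow> (\<exists>a b c. x = [a,b,c])"
  by (auto simp: numeral_3_eq_3 length_Suc_conv)
lemma len2: "length x = 2 \<longleftrightarrow> (\<exists>a b. x = [a,b])"
  by (auto simp: numeral_2_eq_2 length_Suc_conv)
lemma len1: "length x = 1 \<longleftrightarrow> (\<exists>a. x = [a])"
  by (auto simp: length_Suc_conv)

definition Pg :: "nat \<Rightarrow> bool" where
  "Pg m \<longleftrightarrow> (\<forall>x y. length x = m \<longrightarrow> length y = m \<longrightarrow> x \<noteq> y \<longrightarrow>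
      dotb (xb x y) (xb (gg m x) (gg m y))) \<and> (\<forall>x. length x = m \<longrightarrow> length (gg m x) = m)"

lemma Pg1: "Pg 1"
  unfolding Pg_def len1 gg_def by (auto simp: xb_def)

lemma Pg2: "Pg 2"
  unfolding Pg_def len2 gg_def by (auto simp: xb_def)

lemma Pg3: "Pg 3"
  unfolding Pg_def len3 gg_def
proof (intro conjI allI impI)
  fix x y :: "bool list"
  assume "\<exists>a b c. x = [a,b,c]" "\<exists>a b c. y = [a,b,c]" "x \<noteq> y"
  then obtain a b c d e f where "x = [a,b,c]" "y = [d,e,f]" "x \<noteq> y" by blast
  then show "dotb (xb x y) (xb (if (3::nat) = 1 then g1 x else if (3::nat) = 2 then g2 x else g3 x)
      (if (3::nat) = 1 then g1 y else if (3::nat) = 2 then g2 y else g3 y))"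
    by (cases a; cases b; cases c; cases d; cases e; cases f) (simp_all add: xb_def)
next
  fix x :: "bool list"
  assume "\<exists>a b c. x = [a,b,c]"
  then obtain a b c where "x = [a,b,c]" by blast
  then show "\<exists>a b c. (if (3::nat) = 1 then g1 x else if (3::nat) = 2 then g2 x else g3 x) = [a,b,c]"
    by (cases a; cases b; cases c) auto
qed


definition hz :: "bool list \<Rightarrow> vec" where "hz z = map (\<lambda>b. (False, b)) z"

definition phi :: "nat \<Rightarrow> vec \<Rightarrow> vec" where
  "phi m v = xorv v (hz (gg m (map fst v)))"

lemma xorv4: "xorv (xorv a b) (xorv c d) = xorv (xorv a c) (xorv b d)"
proof (induction a arbitrary: b c d)
  case Nil then show ?case by simp
next
  case (Cons p a) then show ?case by (cases b; cases c; cases d) auto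
qed

lemma om_hz: "length w = length z \<Longrightarrow> om w (hz z) = dotb (map fst w) z"
  by (induction w z rule: list_induct2) (auto simp: hz_def)

lemma xorv_hz: "xorv (hz z) (hz z') = hz (xb z z')"
proof (induction z arbitrary: z')
  case Nil then show ?case by (simp add: hz_def xb_def)
next
  case (Cons b z) then show ?case by (cases z') (auto simp: hz_def xb_def)
qed

lemma qv_hz: "\<not> qv (hz z)"
  by (induction z) (auto simp: hz_def)

lemma fst_xorv: "map fst (xorv v w) = xb (map fst v) (map fst w)"
proof (induction v arbitrary: w)
  case Nil then show ?case by (simp add: xb_def)
next
  case (Cons p v) then show ?case by (cases w) (auto simp: xb_def)
qed

lemma len_hz[simp]: "length (hz z) = length z" by (simp add: hz_def)
lemma len_xb[simp]: "length (xb x y) = min (length x) (length y)" by (simp add: xb_def)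

lemma fst_phi: "Pg m \<Longrightarrow> length v = m \<Longrightarrow> map fst (phi m v) = map fst v"
proof -
  assume P: "Pg m" and l: "length v = m"
  have lg: "length (gg m (map fst v)) = m" using P l unfolding Pg_def by simp
  have "map fst (phi m v) = xb (map fst v) (map fst (hz (gg m (map fst v))))"
    unfolding phi_def fst_xorv ..
  also have "map fst (hz (gg m (map fst v))) = replicate m False"
    using lg by (simp add: hz_def comp_def map_replicate_const)
  also have "xb (map fst v) (replicate m False) = map fst v"
    using l by (induction v arbitrary: m) (auto simp: xb_def)
  finally show ?thesis .
qed

lemma len_phi: "Pg m \<Longrightarrow> length v = m \<Longrightarrow> length (phi m v) = m"
  unfolding phi_def Pg_def by simp

lemma phi_invol: "Pg m \<Longrightarrow> length v = m \<Longrightarrow> phi m (phi m v) = v"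
proof -
  assume P: "Pg m" and l: "length v = m"
  have lg: "length (hz (gg m (map fst v))) = m" using P l unfolding Pg_def by simp
  have "phi m (phi m v) = xorv (phi m v) (hz (gg m (map fst v)))"
    unfolding phi_def[of m "phi m v"] fst_phi[OF P l] ..
  also have "\<dots> = xorv v (xorv (hz (gg m (map fst v))) (hz (gg m (map fst v))))"
    unfolding phi_def by (rule xorv_assoc)
  also have "\<dots> = v" using l lg by (simp add: xorv_self xorv_zv)
  finally show ?thesis .
qed

lemma phi_q: assumes P: "Pg m" and l: "length v = m" "length w = m" and d: "map fst v \<noteq> map fst w"
  shows "qv (xorv (phi m v) (phi m w)) = (\<not> qv (xorv v w))"
proof -
  let ?gv = "gg m (map fst v)" and ?gw = "gg m (map fst w)"
  have lg: "length ?gv = m" "length ?gw = m" using P l unfolding Pg_def by auto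
  have e: "xorv (phi m v) (phi m w) = xorv (xorv v w) (hz (xb ?gv ?gw))"
    unfolding phi_def xorv4[of v _ w] xorv_hz ..
  have lx: "length (xorv v w) = length (hz (xb ?gv ?gw))" using l lg by simp
  have "om (xorv v w) (hz (xb ?gv ?gw)) = dotb (xb (map fst v) (map fst w)) (xb ?gv ?gw)"
    using om_hz[of "xorv v w" "xb ?gv ?gw"] l lg by (simp add: fst_xorv)
  also have "\<dots> = True" using P l d unfolding Pg_def by auto
  finally have "om (xorv v w) (hz (xb ?gv ?gw))" by simp
  then show ?thesis unfolding e q_xorv[OF lx] using qv_hz by simp
qed

definition dec :: "bool \<times> bool \<Rightarrow> nat" where
  "dec p = (if fst p then (if snd p then 1 else 2) else (if snd p then 3 else 0))"

lemma dec_enc: "s < 4 \<Longrightarrow> dec (enc s) = s"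
  using lt4[of s] by (auto simp: dec_def enc_def)
lemma enc_dec: "enc (dec p) = p"
  by (cases p) (auto simp: dec_def enc_def)
lemma dec_lt: "dec p < 4" by (auto simp: dec_def)

definition psi :: "nat \<Rightarrow> nat list \<Rightarrow> nat list" where
  "psi m a = map dec (phi m (V a))"

lemma V_psi: "V (psi m a) = phi m (V a)"
  unfolding psi_def V_def by (simp add: enc_dec comp_def)

lemma V_dec: "a \<in> L m \<Longrightarrow> map dec (V a) = a"
  unfolding V_def L_def by (auto intro!: map_idI simp: dec_enc)

lemma psi_L: "Pg m \<Longrightarrow> a \<in> L m \<Longrightarrow> psi m a \<in> L m"
  unfolding psi_def L_def using len_phi[of m "V a"] by (auto simp: dec_lt)

lemma psi_invol: "Pg m \<Longrightarrow> a \<in> L m \<Longrightarrow> psi m (psi m a) = a"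
proof -
  assume P: "Pg m" and a: "a \<in> L m"
  have "psi m (psi m a) = map dec (phi m (phi m (V a)))" unfolding psi_def[of m "psi m a"] V_psi ..
  also have "\<dots> = a" using phi_invol[OF P, of "V a"] a V_dec[OF a] by (simp add: L_def)
  finally show ?thesis .
qed

definition piM :: "nat \<Rightarrow> mat \<Rightarrow> mat" where
  "piM m A = M (psi m (inv_into (L m) M A))"

lemma injM_L: "inj_on M (L m)"
  by (rule inj_onI) (rule M_inj)

lemma piM_M: "a \<in> L m \<Longrightarrow> piM m (M a) = M (psi m a)"
  unfolding piM_def using inv_into_f_f[OF injM_L] by simp

lemma swap_exists: assumes P: "Pg m" shows "\<exists>\<pi>. swapping_automorphism m \<pi>"
proof
  show "swapping_automorphism m (piM m)"
    unfolding swapping_automorphism_def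
  proof (intro conjI ballI)
    show "bij_betw (piM m) (basis m) (basis m)"
    proof (rule bij_betw_byWitness[where f'="piM m"])
      show "\<forall>a\<in>basis m. piM m (piM m a) = a"
        unfolding basis_L using piM_M psi_L[OF P] psi_invol[OF P] by auto
      show "\<forall>a'\<in>basis m. piM m (piM m a') = a'"
        unfolding basis_L using piM_M psi_L[OF P] psi_invol[OF P] by auto
      show "piM m ` basis m \<subseteq> basis m"
        unfolding basis_L using piM_M psi_L[OF P] by auto
      show "piM m ` basis m \<subseteq> basis m"
        unfolding basis_L using piM_M psi_L[OF P] by auto
    qed
  next
    fix A B assume AB: "A \<in> basis m" "B \<in> basis m"
    then obtain a b where ab: "a \<in> L m" "b \<in> L m" "A = M a" "B = M b" unfolding basis_L by auto
    have pab: "psi m a \<in> L m" "psi m b \<in> L m" using psi_L[OF P] ab by auto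
    have l: "length (V a) = m" "length (V b) = m" using ab by (auto simp: L_def)
    have f: "map fst (V (psi m a)) = map fst (V a)" "map fst (V (psi m b)) = map fst (V b)"
      unfolding V_psi using fst_phi[OF P] l by auto
    have q: "map fst (V a) \<noteq> map fst (V b) \<Longrightarrow> qv (xorv (V (psi m a)) (V (psi m b))) = (\<not> qv (xorv (V a) (V b)))"
      unfolding V_psi using phi_q[OF P l] by simp
    show "red m A B = blue m (piM m A) (piM m B)"
      unfolding ab piM_M[OF ab(1)] piM_M[OF ab(2)] red_iff[OF ab(1,2)] blue_iff[OF pab] f
      using q by auto
    show "blue m A B = red m (piM m A) (piM m B)"
      unfolding ab piM_M[OF ab(1)] piM_M[OF ab(2)] blue_iff[OF ab(1,2)] red_iff[OF pab] f
      using q by auto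
  qed
qed



theorem theorem3:
  fixes m :: nat
  assumes "m \<ge> 4"
  shows "(\<exists>S. transversal m S \<and>
            \<not> (\<exists>S'. transversal m S' \<and>
                 ec_isomorphic (induced m S') (colour_complement (induced m S))))
       \<and> \<not> (\<exists>\<pi>. bij_betw \<pi> (basis m) (basis m) \<and>
              (\<forall>A\<in>basis m. \<forall>B\<in>basis m.
                  (blue m A B \<longrightarrow> red m (\<pi> A) (\<pi> B)) \<and>
                  (red m A B \<longrightarrow> blue m (\<pi> A) (\<pi> B))))
       \<and> \<not> (\<exists>P. (\<forall>p\<in>P. \<exists>S S'. p = {S, S'} \<and> S \<noteq> S' \<and>
                   ec_isomorphic (induced m S) (colour_complement (induced m S')) \<and>
                   ec_isomorphic (induced m S') (colour_complement (induced m S)))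
              \<and> (\<forall>p\<in>P. \<forall>q\<in>P. p \<noteq> q \<longrightarrow> p \<inter> q = {})
              \<and> \<Union>P = {S. transversal m S \<and>
                         \<not> ec_isomorphic (induced m S) (colour_complement (induced m S))})
       \<and> {m'::nat. m' \<ge> 1 \<and> (\<exists>\<pi>. swapping_automorphism m' \<pi>)} = {1, 2, 3}"
proof (intro conjI)
  show "\<exists>S. transversal m S \<and>
            \<not> (\<exists>S'. transversal m S' \<and>
                 ec_isomorphic (induced m S') (colour_complement (induced m S)))"
    by (rule exI[of _ "Tb m"]) (intro conjI Tb_transversal part1[OF assms])
  show "\<not> (\<exists>\<pi>. bij_betw \<pi> (basis m) (basis m) \<and>
              (\<forall>A\<in>basis m. \<forall>B\<in>basis m.
                  (blue m A B \<longrightarrow> red m (\<pi> A) (\<pi> B)) \<and>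
                  (red m A B \<longrightarrow> blue m (\<pi> A) (\<pi> B))))"
    by (rule no_swap[OF assms])
  show "\<not> (\<exists>P. (\<forall>p\<in>P. \<exists>S S'. p = {S, S'} \<and> S \<noteq> S' \<and>
                   ec_isomorphic (induced m S) (colour_complement (induced m S')) \<and>
                   ec_isomorphic (induced m S') (colour_complement (induced m S)))
              \<and> (\<forall>p\<in>P. \<forall>q\<in>P. p \<noteq> q \<longrightarrow> p \<inter> q = {})
              \<and> \<Union>P = {S. transversal m S \<and>
                         \<not> ec_isomorphic (induced m S) (colour_complement (induced m S))})"
  proof
    let ?I = "\<lambda>S S'. ec_isomorphic (induced m S) (colour_complement (induced m S'))"
    let ?Q = "{S. transversal m S \<and> \<not> ?I S S}"
    assume "\<exists>P. (\<forall>p\<in>P. \<exists>S S'. p = {S, S'} \<and> S \<noteq> S' \<and> ?I S S' \<and> ?I S' S)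
              \<and> (\<forall>p\<in>P. \<forall>q\<in>P. p \<noteq> q \<longrightarrow> p \<inter> q = {})
              \<and> \<Union>P = ?Q"
    then obtain P where PP: "(\<forall>p\<in>P. \<exists>S S'. p = {S, S'} \<and> S \<noteq> S' \<and> ?I S S' \<and> ?I S' S)
              \<and> (\<forall>p\<in>P. \<forall>q\<in>P. p \<noteq> q \<longrightarrow> p \<inter> q = {})
              \<and> \<Union>P = ?Q" by (rule exE)
    have P1: "\<forall>p\<in>P. \<exists>S S'. p = {S, S'} \<and> S \<noteq> S' \<and> ?I S S' \<and> ?I S' S"
      using PP by (rule conjunct1)
    have P3: "\<Union>P = ?Q" using PP by (rule conjunct2[OF conjunct2])
    have nT: "\<not> (\<exists>S'. transversal m S' \<and> ?I S' (Tb m))"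
      by (rule part1[OF assms])
    have "\<not> ?I (Tb m) (Tb m)"
    proof
      assume "?I (Tb m) (Tb m)"
      then have "\<exists>S'. transversal m S' \<and> ?I S' (Tb m)" using Tb_transversal by (intro exI[of _ "Tb m"] conjI)
      then show False using nT by (rule notE[rotated])
    qed
    then have "Tb m \<in> ?Q" using Tb_transversal by simp
    then have "Tb m \<in> \<Union>P" by (simp only: P3)
    then obtain p where p: "p \<in> P" "Tb m \<in> p" by (rule UnionE)
    have "\<exists>S S'. p = {S, S'} \<and> S \<noteq> S' \<and> ?I S S' \<and> ?I S' S" using P1 p(1) by (rule bspec)
    then obtain S S' where SS: "p = {S, S'}" "?I S S'" "?I S' S" by (elim exE conjE)
    have "S \<in> \<Union>P" "S' \<in> \<Union>P" using SS(1) p(1) by (auto intro: UnionI)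
    then have "S \<in> ?Q" "S' \<in> ?Q" by (simp_all only: P3)
    then have tS: "transversal m S" "transversal m S'" by simp_all
    have TS: "Tb m = S \<or> Tb m = S'" using p(2) SS(1) by simp
    show False
    proof (cases "Tb m = S")
      case True
      then have "transversal m S' \<and> ?I S' (Tb m)" using tS(2) SS(3) by simp
      then show False using nT by blast
    next
      case False
      then have "Tb m = S'" using TS by simp
      then have "transversal m S \<and> ?I S (Tb m)" using tS(1) SS(2) by simp
      then show False using nT by blast
    qed
  qed
  show "{m'::nat. m' \<ge> 1 \<and> (\<exists>\<pi>. swapping_automorphism m' \<pi>)} = {1, 2, 3}"
  proof
    show "{m'::nat. m' \<ge> 1 \<and> (\<exists>\<pi>. swapping_automorphism m' \<pi>)} \<subseteq> {1, 2, 3}"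
    proof
      fix k assume "k \<in> {m'::nat. m' \<ge> 1 \<and> (\<exists>\<pi>. swapping_automorphism m' \<pi>)}"
      then obtain \<pi> where k: "k \<ge> 1" "swapping_automorphism k \<pi>" by blast
      have "\<not> k \<ge> 4"
      proof
        assume k4: "k \<ge> 4"
        have "\<exists>\<pi>. bij_betw \<pi> (basis k) (basis k) \<and>
              (\<forall>A\<in>basis k. \<forall>B\<in>basis k.
                  (blue k A B \<longrightarrow> red k (\<pi> A) (\<pi> B)) \<and>
                  (red k A B \<longrightarrow> blue k (\<pi> A) (\<pi> B)))"
          using k(2) unfolding swapping_automorphism_def by blast
        then show False using no_swap[OF k4] by blast
      qed
      then have "k = 1 \<or> k = 2 \<or> k = 3" using k(1) by linarith
      then show "k \<in> {1, 2, 3}" by blast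
    qed
    show "{1, 2, 3} \<subseteq> {m'::nat. m' \<ge> 1 \<and> (\<exists>\<pi>. swapping_automorphism m' \<pi>)}"
      using swap_exists[OF Pg1] swap_exists[OF Pg2] swap_exists[OF Pg3] by simp
  qed
qed


end
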